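(* Let $H$ be a separable complex Hilbert space, $\{v_j\}_{j\in\mathbb N}$ an orthonormal basis of $H$, $\{w_j\}_{j\in\mathbb N}$ a set of unit vectors in $H$, and $N\ge1$. Let $\mathcal B_N=\{w_j\}_{1\le j\le N}\cup\{v_j\}_{j\ge N+1}$, $\hat H_N=\operatorname{span}\{v_1,\dots,v_N,w_1,\dots,w_N\}$ and $S_H=\{f\in H:\|f\|=1\}$. Then $\mathcal B_N$ is a frame of $H$ if and only if for every $f\in S_H\cap\hat H_N$, $$\sum_{j=1}^N\big(|\langle f,w_j\rangle|^2-|\langle f,v_j\rangle|^2\big)+1>0.$$ Moreover, the optimal frame bounds of $\mathcal B_N$ are the maximum and minimum of the functional $f\mapsto\sum_{j=1}^N(|\langle f,w_j\rangle|^2-|\langle f,v_j\rangle|^2)+1$ on $S_H\cap\hat H_N$.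
   Context: A sequence $\{u_j\}$ in $H$ is a frame if there are constants $0<A\le B<\infty$ with $A\|f\|^2\le\sum_j|\langle f,u_j\rangle|^2\le B\|f\|^2$ for all $f\in H$; the optimal frame bounds are the largest such $A$ and smallest such $B$. *)

theory Defs
  imports "HOL-Analysis.Analysis"
begin

text \<open>HOL-Analysis only provides real inner product
spaces, so we extend the class real_inner by a complex scalar multiplication
and a complex inner product (linear in the first argument, conjugate-symmetric)
whose real part is the underlying real inner product. A complex Hilbert space is a type of sort
{complex_inner, complete_space}.\<close>

class complex_inner = real_inner +
  fixes scaleC :: "complex \<Rightarrow> 'a \<Rightarrow> 'a"
    and cinner :: "'a \<Rightarrow> 'a \<Rightarrow> complex"
  assumes scaleC_add_right: "scaleC a (x + y) = scaleC a x + scaleC a y"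
    and scaleC_add_left: "scaleC (a + b) x = scaleC a x + scaleC b x"
    and scaleC_scaleC: "scaleC a (scaleC b x) = scaleC (a * b) x"
    and scaleC_one: "scaleC 1 x = x"
    and scaleR_scaleC: "scaleR r x = scaleC (complex_of_real r) x"
    and cinner_add_left: "cinner (x + y) z = cinner x z + cinner y z"
    and cinner_scaleC_left: "cinner (scaleC a x) y = a * cinner x y"
    and cinner_commute: "cinner x y = cnj (cinner y x)"
    and inner_cinner: "inner x y = Re (cinner x y)"

definition cspan :: "'a::complex_inner set \<Rightarrow> 'a set" where
  "cspan S = {\<Sum>x\<in>F. scaleC (c x) x | F c. finite F \<and> F \<subseteq> S}"

definition orthonormal_basis :: "(nat \<Rightarrow> 'a::complex_inner) \<Rightarrow> bool" where
  "orthonormal_basis v \<longleftrightarrow>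
     (\<forall>i j. cinner (v i) (v j) = (if i = j then 1 else 0)) \<and>
     closure (cspan (range v)) = UNIV"

definition frame_bounds :: "(nat \<Rightarrow> 'a::complex_inner) \<Rightarrow> real \<Rightarrow> real \<Rightarrow> bool" where
  "frame_bounds u A B \<longleftrightarrow> 0 < A \<and> A \<le> B \<and>
     (\<forall>f. summable (\<lambda>j. (cmod (cinner f (u j)))\<^sup>2) \<and>
          A * (norm f)\<^sup>2 \<le> (\<Sum>j. (cmod (cinner f (u j)))\<^sup>2) \<and>
          (\<Sum>j. (cmod (cinner f (u j)))\<^sup>2) \<le> B * (norm f)\<^sup>2)"

definition frame :: "(nat \<Rightarrow> 'a::complex_inner) \<Rightarrow> bool" where
  "frame u \<longleftrightarrow> (\<exists>A B. frame_bounds u A B)"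

definition optimal_frame_bounds :: "(nat \<Rightarrow> 'a::complex_inner) \<Rightarrow> real \<Rightarrow> real \<Rightarrow> bool" where
  "optimal_frame_bounds u A B \<longleftrightarrow> frame_bounds u A B \<and>
     (\<forall>A' B'. frame_bounds u A' B' \<longrightarrow> A' \<le> A \<and> B \<le> B')"

end

theory Submission
  imports Defs "HOL-Analysis.Analysis"
begin


lemma scaleC_zero_left [simp]: "scaleC 0 (x::'a::complex_inner) = 0"
  using scaleR_scaleC[of 0 x] by simp

lemma cinner_zero_left [simp]: "cinner 0 (y::'a::complex_inner) = 0"
  by (metis cinner_scaleC_left mult_zero_left scaleC_zero_left)

lemma cinner_diff_left: "cinner (x - y) (z::'a::complex_inner) = cinner x z - cinner y z"
  using cinner_add_left[of "x - y" y z] by simp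

lemma cinner_scaleR_left: "cinner (r *\<^sub>R x) (y::'a::complex_inner) = of_real r * cinner x y"
  by (simp add: scaleR_scaleC cinner_scaleC_left)

lemma cinner_scaleC_right: "cinner x (scaleC a (y::'a::complex_inner)) = cnj a * cinner x y"
  by (metis cinner_commute cinner_scaleC_left complex_cnj_cnj complex_cnj_mult)

lemma cinner_add_right: "cinner x (y + (z::'a::complex_inner)) = cinner x y + cinner x z"
  by (metis cinner_commute cinner_add_left complex_cnj_add)

lemma cinner_zero_right [simp]: "cinner (x::'a::complex_inner) 0 = 0"
  by (metis cinner_commute cinner_zero_left complex_cnj_zero)

lemma cinner_diff_right: "cinner x (y - (z::'a::complex_inner)) = cinner x y - cinner x z"
  using cinner_add_right[of x "y - z" z] by simp

lemma cinner_sum_left: "cinner (\<Sum>i\<in>I. u i) (y::'a::complex_inner) = (\<Sum>i\<in>I. cinner (u i) y)"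
  by (induct I rule: infinite_finite_induct) (simp_all add: cinner_add_left)

lemma cinner_sum_right: "cinner y (\<Sum>i\<in>I. u i) = (\<Sum>i\<in>I. cinner (y::'a::complex_inner) (u i))"
  by (induct I rule: infinite_finite_induct) (simp_all add: cinner_add_right)

lemma norm_sq_cinner: "(norm (x::'a::complex_inner))\<^sup>2 = Re (cinner x x)"
  by (simp add: power2_norm_eq_inner inner_cinner)

lemma cinner_self_real: "cinner x x = complex_of_real ((norm (x::'a::complex_inner))\<^sup>2)"
proof -
  have "Im (cinner x x) = 0"
    using cinner_commute[of x x] by (metis complex_cnj_cancel_iff complex_cnj_minus complex_cnj_zero_iff
        diff_0 Im_complex_of_real cnj.simps(2) complex_eq_cancel_iff2 neg_equal_zero)
  then show ?thesis by (simp add: complex_eq_iff norm_sq_cinner)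
qed

lemma cmod_cinner_sq:
  "(cmod (cinner f (x::'a::complex_inner)))\<^sup>2 = (inner f x)\<^sup>2 + (inner f (scaleC \<i> x))\<^sup>2"
proof -
  have "inner f (scaleC \<i> x) = Im (cinner f x)"
    by (simp add: inner_cinner cinner_scaleC_right)
  then show ?thesis by (simp add: cmod_power2 inner_cinner)
qed

lemma cinner_scaleR_sq:
  "(cmod (cinner (r *\<^sub>R f) (x::'a::complex_inner)))\<^sup>2 = r\<^sup>2 * (cmod (cinner f x))\<^sup>2"
  by (simp add: cinner_scaleR_left norm_mult power_mult_distrib)

lemma pyth: "inner (a::'a::real_inner) b = 0 \<Longrightarrow> (norm (a + b))\<^sup>2 = (norm a)\<^sup>2 + (norm b)\<^sup>2"
  by (simp add: norm_add_Pythagorean orthogonal_def)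

lemma cinner_lincomb_right:
  "cinner z (\<Sum>i\<in>I. scaleC (d i) (u i)) = (\<Sum>i\<in>I. cnj (d i) * cinner (z::'a::complex_inner) (u i))"
  by (simp add: cinner_sum_right cinner_scaleC_right)

lemma cinner_lincomb_left:
  "cinner (\<Sum>i\<in>I. scaleC (d i) (u i)) z = (\<Sum>i\<in>I. d i * cinner (u i) (z::'a::complex_inner))"
  by (simp add: cinner_sum_left cinner_scaleC_left)

lemma bessel_aux:
  fixes v :: "nat \<Rightarrow> 'a::complex_inner" and x :: 'a
  assumes orth: "\<And>i j. i \<in> I \<Longrightarrow> j \<in> I \<Longrightarrow> cinner (v i) (v j) = (if i = j then 1 else 0)"
    and fin: "finite I"
  defines "s \<equiv> (\<Sum>i\<in>I. scaleC (cinner x (v i)) (v i))"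
  shows "\<And>k. k \<in> I \<Longrightarrow> cinner (x - s) (v k) = 0"
    and "(norm (x - s))\<^sup>2 = (norm x)\<^sup>2 - (\<Sum>i\<in>I. (cmod (cinner x (v i)))\<^sup>2)"
proof -
  have sv: "cinner s (v k) = cinner x (v k)" if "k \<in> I" for k
  proof -
    have "cinner s (v k) = (\<Sum>i\<in>I. cinner x (v i) * (if i = k then 1 else 0))"
      unfolding s_def cinner_lincomb_left using orth that by (intro sum.cong) auto
    also have "\<dots> = cinner x (v k)" using fin that by (simp add: if_distrib cong: if_cong)
    finally show ?thesis .
  qed
  show o: "cinner (x - s) (v k) = 0" if "k \<in> I" for k
    using sv[OF that] by (simp add: cinner_diff_left)
  have "cinner (x - s) s = 0"
    using o[unfolded s_def] unfolding s_def cinner_lincomb_right by simp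
  then have "inner (x - s) s = 0" by (simp add: inner_cinner)
  then have "(norm x)\<^sup>2 = (norm (x - s))\<^sup>2 + (norm s)\<^sup>2"
    using pyth[of "x - s" s] by simp
  moreover have "cinner s s = (\<Sum>i\<in>I. cnj (cinner x (v i)) * cinner x (v i))"
  proof -
    have "cinner s s = (\<Sum>i\<in>I. cnj (cinner x (v i)) * cinner s (v i))"
      by (subst (2) s_def) (simp add: cinner_lincomb_right)
    also have "\<dots> = (\<Sum>i\<in>I. cnj (cinner x (v i)) * cinner x (v i))"
      using sv by simp
    finally show ?thesis .
  qed
  then have "(norm s)\<^sup>2 = (\<Sum>i\<in>I. (cmod (cinner x (v i)))\<^sup>2)"
    by (simp add: norm_sq_cinner mult.commute complex_mult_cnj cmod_power2)
  ultimately show "(norm (x - s))\<^sup>2 = (norm x)\<^sup>2 - (\<Sum>i\<in>I. (cmod (cinner x (v i)))\<^sup>2)"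
    by simp
qed

lemma bessel:
  fixes v :: "nat \<Rightarrow> 'a::complex_inner" and x :: 'a
  assumes orth: "\<And>i j. i \<in> I \<Longrightarrow> j \<in> I \<Longrightarrow> cinner (v i) (v j) = (if i = j then 1 else 0)"
    and fin: "finite I"
  shows "(\<Sum>i\<in>I. (cmod (cinner x (v i)))\<^sup>2) \<le> (norm x)\<^sup>2"
  using bessel_aux(2)[OF orth fin, of x] by (metis diff_ge_0_iff_ge zero_le_power2)



lemma parseval:
  fixes v :: "nat \<Rightarrow> 'a::complex_inner" and f :: 'a
  assumes onb: "orthonormal_basis v"
  shows "(\<lambda>j. (cmod (cinner f (v j)))\<^sup>2) sums (norm f)\<^sup>2"
proof -
  have orth: "\<And>i j. cinner (v i) (v j) = (if i = j then 1 else 0)"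
    using onb unfolding orthonormal_basis_def by blast
  have cl: "f \<in> closure (cspan (range v))"
    using onb unfolding orthonormal_basis_def by blast
  define S where "S n = (\<Sum>i<n. (cmod (cinner f (v i)))\<^sup>2)" for n
  define s where "s n = (\<Sum>i<n. scaleC (cinner f (v i)) (v i))" for n
  have Sle: "S n \<le> (norm f)\<^sup>2" for n
    unfolding S_def by (rule bessel) (simp_all add: orth)
  have key: "\<exists>n0. \<forall>n\<ge>n0. (norm f)\<^sup>2 - S n < e" if "e > 0" for e
  proof -
    obtain y where y: "y \<in> cspan (range v)" "dist y f < sqrt e"
      using cl \<open>e > 0\<close> unfolding closure_approachable by (meson real_sqrt_gt_zero)
    obtain F d where F: "finite F" "F \<subseteq> range v" "y = (\<Sum>x\<in>F. scaleC (d x) x)"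
      using y(1) unfolding cspan_def by blast
    obtain C where C: "finite C" "F = v ` C"
      using finite_subset_image[OF F(1) F(2)] by blast
    obtain n0 where n0: "C \<subseteq> {..<n0}" using finite_nat_bounded[OF C(1)] by blast
    have "(norm f)\<^sup>2 - S n < e" if "n \<ge> n0" for n
    proof -
      have o: "cinner (f - s n) (v k) = 0" if "k < n" for k
        unfolding s_def by (rule bessel_aux(1)) (simp_all add: orth that)
      have "cinner (f - s n) y = 0"
        unfolding F(3) cinner_lincomb_right
        by (rule sum.neutral) (use C n0 \<open>n \<ge> n0\<close> o in auto)
      moreover have "cinner (f - s n) (s n) = 0"
        by (subst (2) s_def) (simp add: cinner_lincomb_right o)
      ultimately have "inner (f - s n) (s n - y) = 0"
        by (simp add: inner_cinner cinner_diff_right)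
      then have "(norm (f - y))\<^sup>2 = (norm (f - s n))\<^sup>2 + (norm (s n - y))\<^sup>2"
        using pyth[of "f - s n" "s n - y"] by simp
      moreover have "(norm (f - s n))\<^sup>2 = (norm f)\<^sup>2 - S n"
        unfolding s_def S_def by (rule bessel_aux(2)) (simp_all add: orth)
      moreover have "(norm (f - y))\<^sup>2 < e"
      proof -
        have "norm (f - y) < sqrt e" using y(2) by (simp add: dist_norm norm_minus_commute)
        then have "(norm (f - y))\<^sup>2 < (sqrt e)\<^sup>2" by (rule power_strict_mono) auto
        then show ?thesis using \<open>e > 0\<close> by simp
      qed
      ultimately show ?thesis
        by (smt (verit) zero_le_power2)
    qed
    then show ?thesis by blast
  qed
  have "S \<longlonglongrightarrow> (norm f)\<^sup>2"
  proof (rule LIMSEQ_I)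
    fix r :: real assume "r > 0"
    then obtain n0 where "\<forall>n\<ge>n0. (norm f)\<^sup>2 - S n < r" using key by blast
    then show "\<exists>no. \<forall>n\<ge>no. norm (S n - (norm f)\<^sup>2) < r"
      using Sle by (metis abs_minus_commute abs_of_nonneg diff_ge_0_iff_ge real_norm_def)
  qed
  then show ?thesis unfolding sums_def S_def .
qed



lemma compact_box:
  fixes B :: "'a set"
  shows "compact (Pi UNIV (\<lambda>v. if v \<in> B then {-R..R} else {0::real}))"
proof -
  have "compactin (product_topology (\<lambda>_. euclidean) UNIV)
          (PiE UNIV (\<lambda>v. if v \<in> B then {-R..R} else {0::real}))"
  proof (subst compactin_PiE, rule disjI2, intro ballI)
    fix i show "compactin euclidean (if i \<in> B then {-R..R} else {0::real})" by simp
  qed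
  then show ?thesis by (simp only: euclidean_product_topology PiE_UNIV_domain compactin_euclidean_iff)
qed

lemma cont_coord: "continuous_on A (\<lambda>u. u v :: 'b::topological_space)"
  by (rule continuous_on_subset[OF continuous_on_product_coordinates]) simp

lemma cont_lincomb:
  fixes B :: "'a::real_normed_vector set"
  shows "continuous_on A (\<lambda>u. \<Sum>v\<in>B. u v *\<^sub>R v)"
  by (intro continuous_on_sum continuous_on_scaleR cont_coord continuous_on_const)

lemma indep_bound:
  fixes B :: "'a::real_normed_vector set"
  assumes fin: "finite B" and ind: "independent B"
  shows "\<exists>m>0. \<forall>u. m * (\<Sum>v\<in>B. \<bar>u v\<bar>) \<le> norm (\<Sum>v\<in>B. u v *\<^sub>R v)"
proof (cases "B = {}")
  case True
  then show ?thesis by (intro exI[of _ 1]) auto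
next
  case False
  then obtain b where b: "b \<in> B" by blast
  define U where "U = {u :: 'a \<Rightarrow> real. (\<forall>v. v \<notin> B \<longrightarrow> u v = 0) \<and> (\<Sum>v\<in>B. \<bar>u v\<bar>) = 1}"
  have cU: "closed U"
    unfolding U_def Collect_conj_eq
  proof (intro closed_Int closed_Collect_all closed_Collect_imp closed_Collect_eq)
    show "open {x::'a\<Rightarrow>real. v \<notin> B}" for v by (cases "v \<in> B") auto
  qed (intro continuous_on_sum continuous_on_rabs cont_coord continuous_on_const)+
  have sub: "U \<subseteq> Pi UNIV (\<lambda>v. if v \<in> B then {-1..1} else {0::real})"
  proof
    fix u assume u: "u \<in> U"
    have "\<bar>u v\<bar> \<le> 1" if "v \<in> B" for v
      using member_le_sum[of v B "\<lambda>v. \<bar>u v\<bar>"] fin that u unfolding U_def by auto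
    then show "u \<in> Pi UNIV (\<lambda>v. if v \<in> B then {-1..1} else {0::real})"
      using u unfolding U_def by (auto simp: abs_le_iff)
  qed
  have cpU: "compact U"
    using compact_Int_closed[OF compact_box[of B 1] cU] sub by (simp add: Int_absorb1)
  have "(\<Sum>v\<in>B. \<bar>if v = b then 1 else 0::real\<bar>) = (\<Sum>v\<in>B. if v = b then 1 else 0)"
    by (intro sum.cong) auto
  also have "\<dots> = 1" using b fin by simp
  finally have "(\<lambda>v. if v = b then 1 else 0::real) \<in> U" using b unfolding U_def by auto
  then have neU: "U \<noteq> {}" by blast
  have "\<exists>x\<in>U. \<forall>y\<in>U. norm (\<Sum>v\<in>B. x v *\<^sub>R v) \<le> norm (\<Sum>v\<in>B. y v *\<^sub>R v)"
    by (rule continuous_attains_inf[OF cpU neU]) (intro continuous_on_norm cont_lincomb)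
  then obtain u0 where u0: "u0 \<in> U" "\<And>u. u \<in> U \<Longrightarrow> norm (\<Sum>v\<in>B. u0 v *\<^sub>R v) \<le> norm (\<Sum>v\<in>B. u v *\<^sub>R v)"
    by blast
  define m where "m = norm (\<Sum>v\<in>B. u0 v *\<^sub>R v)"
  have "m > 0"
  proof (rule ccontr)
    assume "\<not> m > 0"
    then have z: "(\<Sum>v\<in>B. u0 v *\<^sub>R v) = 0" unfolding m_def by simp
    have "\<exists>v\<in>B. u0 v \<noteq> 0"
    proof (rule ccontr)
      assume "\<not> ?thesis"
      then have "(\<Sum>v\<in>B. \<bar>u0 v\<bar>) = 0" by simp
      then show False using u0(1) unfolding U_def by simp
    qed
    then have "dependent B" using z fin by (auto simp: dependent_finite)
    then show False using ind by simp
  qed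
  have "m * (\<Sum>v\<in>B. \<bar>u v\<bar>) \<le> norm (\<Sum>v\<in>B. u v *\<^sub>R v)" for u
  proof (cases "(\<Sum>v\<in>B. \<bar>u v\<bar>) = 0")
    case True then show ?thesis by simp
  next
    case False
    define t where "t = (\<Sum>v\<in>B. \<bar>u v\<bar>)"
    have tpos: "t > 0" using False unfolding t_def by (simp add: less_le sum_nonneg)
    define u' where "u' v = (if v \<in> B then u v / t else 0)" for v
    have "(\<Sum>v\<in>B. \<bar>u' v\<bar>) = (\<Sum>v\<in>B. \<bar>u v\<bar> / t)"
      unfolding u'_def using tpos by (intro sum.cong) auto
    also have "\<dots> = 1" using tpos unfolding t_def[symmetric] sum_divide_distrib[symmetric] by simp
    finally have "u' \<in> U" unfolding U_def u'_def by auto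
    then have "m \<le> norm (\<Sum>v\<in>B. u' v *\<^sub>R v)" using u0(2) unfolding m_def by blast
    also have "(\<Sum>v\<in>B. u' v *\<^sub>R v) = (1 / t) *\<^sub>R (\<Sum>v\<in>B. u v *\<^sub>R v)"
      unfolding scaleR_sum_right u'_def by (intro sum.cong) auto
    finally have "m \<le> norm (\<Sum>v\<in>B. u v *\<^sub>R v) / t" using tpos by simp
    then show ?thesis using tpos unfolding t_def[symmetric] by (simp add: field_simps)
  qed
  then show ?thesis using \<open>m > 0\<close> by blast
qed

lemma compact_span_cball:
  fixes G :: "'a::real_normed_vector set"
  assumes finG: "finite G"
  shows "compact (span G \<inter> cball 0 r)"
proof -
  obtain B where B: "B \<subseteq> G" "independent B" "G \<subseteq> span B"
    using maximal_independent_subset by blast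
  have fin: "finite B" using B(1) finG finite_subset by blast
  have spG: "span G = span B"
    using B by (metis span_eq span_superset subset_trans)
  obtain m where m: "m > 0" "\<And>u. m * (\<Sum>v\<in>B. \<bar>u v\<bar>) \<le> norm (\<Sum>v\<in>B. u v *\<^sub>R v)"
    using indep_bound[OF fin B(2)] by blast
  define R where "R = r / m"
  define box where "box = Pi UNIV (\<lambda>v. if v \<in> B then {-R..R} else {0::real})"
  define C where "C = {u :: 'a \<Rightarrow> real. norm (\<Sum>v\<in>B. u v *\<^sub>R v) \<le> r}"
  have cC: "closed C" unfolding C_def
    by (intro closed_Collect_le continuous_on_norm cont_lincomb continuous_on_const)
  have eq: "span B \<inter> cball 0 r = (\<lambda>u. \<Sum>v\<in>B. u v *\<^sub>R v) ` (box \<inter> C)"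
  proof
    show "span B \<inter> cball 0 r \<subseteq> (\<lambda>u. \<Sum>v\<in>B. u v *\<^sub>R v) ` (box \<inter> C)"
    proof
      fix x assume x: "x \<in> span B \<inter> cball 0 r"
      then obtain u where u: "x = (\<Sum>v\<in>B. u v *\<^sub>R v)" using span_finite[OF fin] by auto
      define u' where "u' v = (if v \<in> B then u v else 0)" for v
      have xu': "x = (\<Sum>v\<in>B. u' v *\<^sub>R v)" unfolding u u'_def by (intro sum.cong) auto
      have nx: "norm x \<le> r" using x by simp
      have "\<bar>u' v\<bar> \<le> R" if "v \<in> B" for v
      proof -
        have "\<bar>u' v\<bar> \<le> (\<Sum>v\<in>B. \<bar>u' v\<bar>)" using member_le_sum[of v B "\<lambda>v. \<bar>u' v\<bar>"] fin that by auto
        moreover have "m * (\<Sum>v\<in>B. \<bar>u' v\<bar>) \<le> r" using m(2)[of u'] xu' nx by simp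
        ultimately have "m * \<bar>u' v\<bar> \<le> r"
          by (smt (verit) m(1) mult_left_mono)
        then show ?thesis unfolding R_def using m(1) by (simp add: field_simps)
      qed
      then have "u' \<in> box" unfolding box_def
      proof (intro Pi_I)
        fix v assume h: "\<And>v. v \<in> B \<Longrightarrow> \<bar>u' v\<bar> \<le> R"
        show "u' v \<in> (if v \<in> B then {-R..R} else {0})"
        proof (cases "v \<in> B")
          case True then show ?thesis using h[OF True] by (simp add: abs_le_iff)
        next
          case False then show ?thesis by (simp add: u'_def)
        qed
      qed
      moreover have "u' \<in> C" unfolding C_def using xu' nx by simp
      ultimately show "x \<in> (\<lambda>u. \<Sum>v\<in>B. u v *\<^sub>R v) ` (box \<inter> C)" using xu' by blast
    qed
    show "(\<lambda>u. \<Sum>v\<in>B. u v *\<^sub>R v) ` (box \<inter> C) \<subseteq> span B \<inter> cball 0 r"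
      unfolding C_def by (auto intro!: span_sum span_scale intro: span_base)
  qed
  have "compact ((\<lambda>u. \<Sum>v\<in>B. u v *\<^sub>R v) ` (box \<inter> C))"
    by (intro compact_continuous_image cont_lincomb compact_Int_closed cC)
       (simp add: box_def compact_box)
  then show ?thesis using eq spG by simp
qed



lemma projection:
  fixes G :: "'a::real_inner set"
  assumes finG: "finite G"
  shows "\<exists>g\<in>span G. \<forall>h\<in>span G. inner (f - g) h = 0"
proof -
  define K where "K = span G \<inter> cball 0 (2 * norm f)"
  have cK: "compact K" unfolding K_def by (rule compact_span_cball[OF finG])
  have "0 \<in> K" unfolding K_def by (simp add: span_zero)
  then have neK: "K \<noteq> {}" by blast
  have "\<exists>x\<in>K. \<forall>y\<in>K. norm (f - x) \<le> norm (f - y)"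
    by (rule continuous_attains_inf[OF cK neK]) (intro continuous_intros)
  then obtain g where g: "g \<in> K" "\<And>y. y \<in> K \<Longrightarrow> norm (f - g) \<le> norm (f - y)" by blast
  have gmin: "norm (f - g) \<le> norm (f - h)" if h: "h \<in> span G" for h
  proof (cases "norm h \<le> 2 * norm f")
    case True then show ?thesis using g(2)[of h] h unfolding K_def by simp
  next
    case False
    have "norm (f - g) \<le> norm (f - 0)" using g(2)[OF \<open>0 \<in> K\<close>] .
    also have "\<dots> \<le> norm (f - h)" using False norm_triangle_ineq2[of h f]
      by (simp add: norm_minus_commute)
    finally show ?thesis .
  qed
  have "inner (f - g) h = 0" if h: "h \<in> span G" for h
  proof (rule ccontr)
    define d where "d = f - g"
    define p where "p = inner d h"
    assume "inner (f - g) h \<noteq> 0"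
    then have p0: "p \<noteq> 0" unfolding p_def d_def .
    then have "h \<noteq> 0" unfolding p_def by auto
    then have nh: "(norm h)\<^sup>2 > 0" by simp
    define t where "t = p / (norm h)\<^sup>2"
    have gt: "g + t *\<^sub>R h \<in> span G"
      using g(1) h unfolding K_def by (simp add: span_add span_scale)
    have "(norm (d - t *\<^sub>R h))\<^sup>2 = (norm d)\<^sup>2 - 2 * t * p + t\<^sup>2 * (norm h)\<^sup>2"
      unfolding power2_norm_eq_inner p_def
      by (simp add: inner_diff_left inner_diff_right inner_commute power2_eq_square algebra_simps)
    also have "\<dots> = (norm d)\<^sup>2 - p\<^sup>2 / (norm h)\<^sup>2"
      unfolding t_def using nh by (simp add: field_simps power2_eq_square)
    also have "\<dots> < (norm d)\<^sup>2" using p0 nh by (simp add: divide_pos_pos)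
    finally have "norm (d - t *\<^sub>R h) < norm d"
      by (simp add: power_less_imp_less_base)
    moreover have "norm d \<le> norm (d - t *\<^sub>R h)"
      using gmin[OF gt] unfolding d_def by (simp add: algebra_simps)
    ultimately show False by simp
  qed
  then show ?thesis using g(1) unfolding K_def by blast
qed



lemma cmod_cinner_swap: "cmod (cinner x (y::'a::complex_inner)) = cmod (cinner y x)"
  by (metis cinner_commute complex_mod_cnj)

lemma Im_cinner: "Im (cinner f (x::'a::complex_inner)) = inner f (scaleC \<i> x)"
  by (simp add: inner_cinner cinner_scaleC_right)

lemma span_sub_cspan:
  fixes X :: "'a::complex_inner set"
  assumes finX: "finite X"
  shows "span (X \<union> scaleC \<i> ` X) \<subseteq> cspan X"
proof -
  define T where "T = {y. \<exists>c. y = (\<Sum>x\<in>X. scaleC (c x) x)}"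
  have sT: "subspace T"
    unfolding subspace_def
  proof (intro conjI ballI allI)
    show "0 \<in> T" unfolding T_def by (rule CollectI, rule exI[of _ "\<lambda>_. 0"]) simp
  next
    fix a b assume "a \<in> T" "b \<in> T"
    then obtain c1 c2 where "a = (\<Sum>x\<in>X. scaleC (c1 x) x)" "b = (\<Sum>x\<in>X. scaleC (c2 x) x)"
      unfolding T_def by blast
    then have "a + b = (\<Sum>x\<in>X. scaleC (c1 x + c2 x) x)"
      by (simp add: scaleC_add_left sum.distrib)
    then show "a + b \<in> T" unfolding T_def by (intro CollectI exI[of _ "\<lambda>x. c1 x + c2 x"])
  next
    fix r :: real and a assume "a \<in> T"
    then obtain c where "a = (\<Sum>x\<in>X. scaleC (c x) x)" unfolding T_def by blast
    then have "r *\<^sub>R a = (\<Sum>x\<in>X. scaleC (of_real r * c x) x)"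
      by (simp only: scaleR_sum_right) (simp add: scaleR_scaleC scaleC_scaleC)
    then show "r *\<^sub>R a \<in> T" unfolding T_def by (intro CollectI exI[of _ "\<lambda>x. of_real r * c x"])
  qed
  have base: "scaleC z y \<in> T" if "y \<in> X" for y z
  proof -
    have "(\<Sum>x\<in>X. scaleC (if x = y then z else 0) x) = (\<Sum>x\<in>X. if x = y then scaleC z y else 0)"
      by (intro sum.cong) auto
    also have "\<dots> = scaleC z y" using that finX by simp
    finally show ?thesis unfolding T_def by (intro CollectI exI[of _ "\<lambda>x. if x = y then z else 0"]) simp
  qed
  have "X \<union> scaleC \<i> ` X \<subseteq> T"
    using base[of _ 1] base[of _ \<i>] by (auto simp: scaleC_one)
  then have "span (X \<union> scaleC \<i> ` X) \<subseteq> T" using span_minimal sT by blast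
  also have "T \<subseteq> cspan X" unfolding T_def cspan_def using finX by auto
  finally show ?thesis .
qed



theorem mainTheorem3:
  fixes v w :: "nat \<Rightarrow> 'a::{complex_inner, complete_space}"
    and N :: nat
  assumes onb: "orthonormal_basis v"
    and unit: "\<And>j. norm (w j) = 1"
    and N: "N \<ge> 1"
  defines "B \<equiv> (\<lambda>j. if j < N then w j else v j)"
    and "Hhat \<equiv> cspan (v ` {..<N} \<union> w ` {..<N})"
    and "S \<equiv> {f. norm f = 1}"
    and "\<Phi> \<equiv> (\<lambda>f. (\<Sum>j<N. (cmod (cinner f (w j)))\<^sup>2 - (cmod (cinner f (v j)))\<^sup>2) + 1)"
  shows "(frame B \<longleftrightarrow> (\<forall>f \<in> S \<inter> Hhat. \<Phi> f > 0)) \<and>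
         (frame B \<longrightarrow>
            (\<exists>A M. optimal_frame_bounds B A M \<and>
               (\<exists>f \<in> S \<inter> Hhat. \<Phi> f = A) \<and> (\<forall>f \<in> S \<inter> Hhat. A \<le> \<Phi> f) \<and>
               (\<exists>f \<in> S \<inter> Hhat. \<Phi> f = M) \<and> (\<forall>f \<in> S \<inter> Hhat. \<Phi> f \<le> M)))"
proof -
  have orth: "\<And>i j. cinner (v i) (v j) = (if i = j then 1 else 0)"
    using onb unfolding orthonormal_basis_def by blast
  have nv: "norm (v i) = 1" for i
  proof -
    have "(norm (v i))\<^sup>2 = 1" using orth[of i i] by (simp add: norm_sq_cinner)
    then show ?thesis using norm_ge_zero[of "v i"] by (auto simp: power2_eq_1_iff)
  qed
  define X where "X = v ` {..<N} \<union> w ` {..<N}"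
  define G where "G = X \<union> scaleC \<i> ` X"
  have finX: "finite X" unfolding X_def by simp
  have finG: "finite G" unfolding G_def using finX by simp
  have GH: "span G \<subseteq> Hhat" unfolding G_def Hhat_def X_def[symmetric] by (rule span_sub_cspan[OF finX])
  define P where "P f = (\<Sum>j<N. (cmod (cinner f (w j)))\<^sup>2 - (cmod (cinner f (v j)))\<^sup>2)" for f
  have PhiP: "\<Phi> f = P f + 1" for f unfolding \<Phi>_def P_def by simp
  have Fr: "(\<lambda>j. (cmod (cinner f (B j)))\<^sup>2) sums (P f + (norm f)\<^sup>2)" for f
  proof -
    have pv: "(\<lambda>j. (cmod (cinner f (v j)))\<^sup>2) sums
        (((norm f)\<^sup>2 - (\<Sum>i<N. (cmod (cinner f (v i)))\<^sup>2)) + (\<Sum>i<N. (cmod (cinner f (v i)))\<^sup>2))"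
      using parseval[OF onb, of f] by simp
    have "(\<lambda>i. (cmod (cinner f (v (i + N))))\<^sup>2) sums ((norm f)\<^sup>2 - (\<Sum>i<N. (cmod (cinner f (v i)))\<^sup>2))"
      using pv sums_iff_shift[of "\<lambda>j. (cmod (cinner f (v j)))\<^sup>2" N] by simp
    moreover have "(\<lambda>i. (cmod (cinner f (B (i + N))))\<^sup>2) = (\<lambda>i. (cmod (cinner f (v (i + N))))\<^sup>2)"
      unfolding B_def by simp
    ultimately have "(\<lambda>i. (cmod (cinner f (B (i + N))))\<^sup>2) sums ((norm f)\<^sup>2 - (\<Sum>i<N. (cmod (cinner f (v i)))\<^sup>2))"
      by simp
    then have "(\<lambda>j. (cmod (cinner f (B j)))\<^sup>2) sums
        (((norm f)\<^sup>2 - (\<Sum>i<N. (cmod (cinner f (v i)))\<^sup>2)) + (\<Sum>i<N. (cmod (cinner f (B i)))\<^sup>2))"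
      using sums_iff_shift[of "\<lambda>j. (cmod (cinner f (B j)))\<^sup>2" N] by simp
    moreover have "(\<Sum>i<N. (cmod (cinner f (B i)))\<^sup>2) = (\<Sum>i<N. (cmod (cinner f (w i)))\<^sup>2)"
      unfolding B_def by (intro sum.cong) auto
    ultimately show ?thesis unfolding P_def by (simp add: sum_subtractf algebra_simps)
  qed
  have Pscale: "P (r *\<^sub>R f) = r\<^sup>2 * P f" for r f
    unfolding P_def by (simp add: cinner_scaleR_sq sum_distrib_left algebra_simps)
  have P0: "P 0 = 0" unfolding P_def by simp
  define K where "K = span G \<inter> sphere 0 1"
  have cK: "compact K"
  proof -
    have "K = (span G \<inter> cball 0 1) \<inter> sphere 0 1" unfolding K_def by auto
    moreover have c1: "compact (span G \<inter> cball 0 1)"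
      using compact_span_cball[OF finG, of 1] by simp
    moreover have "compact ((span G \<inter> cball 0 1) \<inter> sphere 0 1)"
    proof (rule compact_Int_closed[OF c1])
      have "sphere (0::'a) 1 = {x. norm x = 1}" by auto
      moreover have "closed {x::'a. norm x = 1}"
        by (intro closed_Collect_eq continuous_on_norm continuous_on_id continuous_on_const)
      ultimately show "closed (sphere (0::'a) 1)" by simp
    qed
    ultimately show ?thesis by simp
  qed
  have inK: "x \<in> K" if "x \<in> X" "norm x = 1" for x
    using that unfolding K_def G_def by (auto intro: span_base)
  have v0K: "v i \<in> K" if "i < N" for i using inK[of "v i"] nv that unfolding X_def by auto
  have w0K: "w 0 \<in> K" using inK[of "w 0"] unit N unfolding X_def by auto
  have neK: "K \<noteq> {}" using w0K by blast
  have Palt: "P f = (\<Sum>j<N. ((inner f (w j))\<^sup>2 + (inner f (scaleC \<i> (w j)))\<^sup>2) -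
                       ((inner f (v j))\<^sup>2 + (inner f (scaleC \<i> (v j)))\<^sup>2))" for f
    unfolding P_def by (simp add: cmod_cinner_sq)
  have contPhi: "continuous_on K \<Phi>"
    unfolding PhiP Palt by (intro continuous_intros)
  obtain fa where fa: "fa \<in> K" "\<And>y. y \<in> K \<Longrightarrow> \<Phi> fa \<le> \<Phi> y"
    using continuous_attains_inf[OF cK neK contPhi] by blast
  obtain fb where fb: "fb \<in> K" "\<And>y. y \<in> K \<Longrightarrow> \<Phi> y \<le> \<Phi> fb"
    using continuous_attains_sup[OF cK neK contPhi] by blast
  define a where "a = \<Phi> fa"
  define b where "b = \<Phi> fb"
  have bes_w: "(\<Sum>i<N. (cmod (cinner (w j) (v i)))\<^sup>2) \<le> 1" for j
    using bessel[of "{..<N}" v "w j"] orth unit by simp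
  have a1: "a \<le> 1"
  proof -
    have "(\<Sum>i<N. \<Sum>j<N. (cmod (cinner (v i) (w j)))\<^sup>2) = (\<Sum>j<N. \<Sum>i<N. (cmod (cinner (w j) (v i)))\<^sup>2)"
      by (subst sum.swap) (simp add: cmod_cinner_swap)
    also have "\<dots> \<le> (\<Sum>j<N. 1)" by (intro sum_mono bes_w)
    finally have tot: "(\<Sum>i<N. \<Sum>j<N. (cmod (cinner (v i) (w j)))\<^sup>2) \<le> (\<Sum>i<N. 1)" by simp
    have "\<exists>i<N. (\<Sum>j<N. (cmod (cinner (v i) (w j)))\<^sup>2) \<le> 1"
    proof (rule ccontr)
      assume "\<not> ?thesis"
      then have "(\<Sum>i<N. (1::real)) < (\<Sum>i<N. \<Sum>j<N. (cmod (cinner (v i) (w j)))\<^sup>2)"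
        using N by (intro sum_strict_mono) auto
      then show False using tot by simp
    qed
    then obtain i where i: "i < N" "(\<Sum>j<N. (cmod (cinner (v i) (w j)))\<^sup>2) \<le> 1" by blast
    have vv: "(\<Sum>j<N. (cmod (cinner (v i) (v j)))\<^sup>2) = 1"
    proof -
      have "(\<Sum>j<N. (cmod (cinner (v i) (v j)))\<^sup>2) = (\<Sum>j<N. if i = j then 1 else 0)"
        by (intro sum.cong) (auto simp: orth)
      then show ?thesis using i(1) by simp
    qed
    have "\<Phi> (v i) \<le> 1" unfolding PhiP P_def sum_subtractf using vv i(2) by simp
    then show ?thesis using fa(2)[OF v0K[OF i(1)]] unfolding a_def by simp
  qed
  have b1: "1 \<le> b"
  proof -
    have "(cmod (cinner (w 0) (w 0)))\<^sup>2 \<le> (\<Sum>j<N. (cmod (cinner (w 0) (w j)))\<^sup>2)"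
      using member_le_sum[of 0 "{..<N}" "\<lambda>j. (cmod (cinner (w 0) (w j)))\<^sup>2"] N by simp
    moreover have "(cmod (cinner (w 0) (w 0)))\<^sup>2 = 1" using unit[of 0] by (simp add: cinner_self_real)
    moreover have "(\<Sum>j<N. (cmod (cinner (w 0) (v j)))\<^sup>2) \<le> 1" using bes_w[of 0] .
    ultimately have "1 \<le> \<Phi> (w 0)" unfolding PhiP P_def sum_subtractf by simp
    then show ?thesis using fb(2)[OF w0K] unfolding b_def by simp
  qed
  have L: "a * (norm f)\<^sup>2 \<le> P f + (norm f)\<^sup>2 \<and> P f + (norm f)\<^sup>2 \<le> b * (norm f)\<^sup>2" for f
  proof -
    obtain g where g: "g \<in> span G" "\<And>h. h \<in> span G \<Longrightarrow> inner (f - g) h = 0"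
      using projection[OF finG, of f] by blast
    have ceq: "cinner f x = cinner g x" if "x \<in> X" for x
    proof -
      have "inner (f - g) x = 0" using g(2) that unfolding G_def by (auto intro: span_base)
      moreover have "inner (f - g) (scaleC \<i> x) = 0" using g(2) that unfolding G_def by (auto intro: span_base)
      ultimately have "cinner (f - g) x = 0"
        by (simp add: complex_eq_iff inner_cinner Im_cinner)
      then show ?thesis by (simp add: cinner_diff_left)
    qed
    have Pfg: "P f = P g" unfolding P_def
      by (intro sum.cong refl) (simp add: ceq X_def)
    have "inner g (f - g) = 0" using g by (simp add: inner_commute)
    then have nf: "(norm f)\<^sup>2 = (norm g)\<^sup>2 + (norm (f - g))\<^sup>2"
      using pyth[of g "f - g"] by simp
    show ?thesis
    proof (cases "g = 0")
      case True
      then have "P f = 0" using Pfg P0 by simp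
      moreover have "a * (norm f)\<^sup>2 \<le> 1 * (norm f)\<^sup>2" using a1 by (intro mult_right_mono) auto
      moreover have "1 * (norm f)\<^sup>2 \<le> b * (norm f)\<^sup>2" using b1 by (intro mult_right_mono) auto
      ultimately show ?thesis by simp
    next
      case False
      define gh where "gh = (1 / norm g) *\<^sub>R g"
      have ghK: "gh \<in> K" unfolding K_def gh_def using g(1) False by (simp add: span_scale)
      have "g = norm g *\<^sub>R gh" unfolding gh_def using False by simp
      then have Pg: "P g = (norm g)\<^sup>2 * P gh" using Pscale by metis
      have ab: "a \<le> P gh + 1" "P gh + 1 \<le> b"
        using fa(2)[OF ghK] fb(2)[OF ghK] unfolding a_def b_def PhiP by auto
      define t where "t = (norm g)\<^sup>2"
      define s where "s = (norm (f - g))\<^sup>2"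
      have t0: "t \<ge> 0" and s0: "s \<ge> 0" unfolding t_def s_def by simp_all
      have eq: "P f + (norm f)\<^sup>2 = t * (P gh + 1) + s" unfolding Pfg Pg nf t_def s_def by (simp add: algebra_simps)
      have "a * t \<le> t * (P gh + 1)" using mult_left_mono[OF ab(1) t0] by (simp add: mult.commute)
      moreover have "t * (P gh + 1) \<le> b * t" using mult_left_mono[OF ab(2) t0] by (simp add: mult.commute)
      moreover have "a * s \<le> s" using mult_right_mono[OF a1 s0] by simp
      moreover have "s \<le> b * s" using mult_right_mono[OF b1 s0] by simp
      moreover have nf': "(norm f)\<^sup>2 = t + s" using nf unfolding t_def s_def .
      moreover have "a * (norm f)\<^sup>2 = a * t + a * s" "b * (norm f)\<^sup>2 = b * t + b * s"
        using nf' by (simp_all add: algebra_simps)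
      ultimately show ?thesis using eq by linarith
    qed
  qed
  have sumeq: "(\<Sum>j. (cmod (cinner f (B j)))\<^sup>2) = P f + (norm f)\<^sup>2" for f
    using Fr[of f] by (simp add: sums_iff)
  have summ: "summable (\<lambda>j. (cmod (cinner f (B j)))\<^sup>2)" for f
    using Fr[of f] by (simp add: sums_iff)
  have unitPhi: "(\<Sum>j. (cmod (cinner f (B j)))\<^sup>2) = \<Phi> f" if "norm f = 1" for f
    using sumeq[of f] that by (simp add: PhiP)
  have KS: "K \<subseteq> S \<inter> Hhat" unfolding K_def S_def using GH by auto
  have faS: "fa \<in> S \<inter> Hhat" and fbS: "fb \<in> S \<inter> Hhat" using fa(1) fb(1) KS by auto
  have nfa: "norm fa = 1" "norm fb = 1" using faS fbS unfolding S_def by auto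
  have fbnd: "frame_bounds B a b" if "a > 0"
    unfolding frame_bounds_def using that a1 b1 L summ sumeq by simp
  have opt: "A' \<le> a \<and> b \<le> B'" if "frame_bounds B A' B'" for A' B'
  proof -
    have "A' * (norm fa)\<^sup>2 \<le> (\<Sum>j. (cmod (cinner fa (B j)))\<^sup>2)"
         "(\<Sum>j. (cmod (cinner fb (B j)))\<^sup>2) \<le> B' * (norm fb)\<^sup>2"
      using that unfolding frame_bounds_def by blast+
    then show ?thesis using unitPhi[OF nfa(1)] unitPhi[OF nfa(2)] nfa unfolding a_def b_def by simp
  qed
  have onS: "a \<le> \<Phi> f \<and> \<Phi> f \<le> b" if "f \<in> S \<inter> Hhat" for f
    using L[of f] that unfolding S_def by (simp add: PhiP)
  have iff: "frame B \<longleftrightarrow> (\<forall>f \<in> S \<inter> Hhat. \<Phi> f > 0)"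
  proof
    assume "frame B"
    then obtain A M where AM: "frame_bounds B A M" unfolding frame_def by blast
    show "\<forall>f \<in> S \<inter> Hhat. \<Phi> f > 0"
    proof
      fix f assume f: "f \<in> S \<inter> Hhat"
      then have "norm f = 1" unfolding S_def by simp
      moreover have "A > 0" "A * (norm f)\<^sup>2 \<le> (\<Sum>j. (cmod (cinner f (B j)))\<^sup>2)"
        using AM unfolding frame_bounds_def by blast+
      ultimately show "\<Phi> f > 0" using unitPhi by simp
    qed
  next
    assume "\<forall>f \<in> S \<inter> Hhat. \<Phi> f > 0"
    then have "a > 0" using faS unfolding a_def by blast
    then show "frame B" unfolding frame_def using fbnd by blast
  qed
  have "frame B \<longrightarrow>
            (\<exists>A M. optimal_frame_bounds B A M \<and>
               (\<exists>f \<in> S \<inter> Hhat. \<Phi> f = A) \<and> (\<forall>f \<in> S \<inter> Hhat. A \<le> \<Phi> f) \<and>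
               (\<exists>f \<in> S \<inter> Hhat. \<Phi> f = M) \<and> (\<forall>f \<in> S \<inter> Hhat. \<Phi> f \<le> M))"
  proof
    assume "frame B"
    then have "a > 0" using iff faS unfolding a_def by blast
    then have "optimal_frame_bounds B a b"
      unfolding optimal_frame_bounds_def using fbnd opt by blast
    moreover have "\<exists>f \<in> S \<inter> Hhat. \<Phi> f = a" using faS unfolding a_def by blast
    moreover have "\<exists>f \<in> S \<inter> Hhat. \<Phi> f = b" using fbS unfolding b_def by blast
    ultimately show "\<exists>A M. optimal_frame_bounds B A M \<and>
               (\<exists>f \<in> S \<inter> Hhat. \<Phi> f = A) \<and> (\<forall>f \<in> S \<inter> Hhat. A \<le> \<Phi> f) \<and>
               (\<exists>f \<in> S \<inter> Hhat. \<Phi> f = M) \<and> (\<forall>f \<in> S \<inter> Hhat. \<Phi> f \<le> M)"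
      using onS by blast
  qed
  with iff show ?thesis by blast
qed

end
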